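(* Let $x$ be a sequence of length $n$, let $i\in\{1,\ldots,n-1\}$ and $y=\tau(x,i)$. Define $r=\overleftarrow{b_x}$ if $x[i]<x[i+1]$ and $\overleftarrow{b_x}>1$; $r=\overleftarrow{a_x}+1$ if $x[i]>x[i+1]$ and $\overleftarrow{a_x}>0$; and $r=n-i+1$ otherwise. Define $\ell=\overrightarrow{a_x}$ if $x[i]<x[i+1]$ and $\overrightarrow{a_x}>0$; $\ell=\overrightarrow{b_x}-1$ if $x[i]>x[i+1]$ and $\overrightarrow{b_x}>1$; and $\ell=i$ otherwise. Then $\overrightarrow{PD}_x[k]=\overrightarrow{PD}_y[k]$ for all $k\in\{i+r,\ldots,n\}$, and $\overleftarrow{PD}_x[k]=\overleftarrow{PD}_y[k]$ for all $k\in\{1,\ldots,i-\ell\}$.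
   Context: Sequences are finite sequences of pairwise distinct integers indexed from $1$. For $1\le i\le n-1$, $\tau(x,i)$ is obtained from $x$ by exchanging $x[i]$ and $x[i+1]$. The parent-distance table of $x$ is $\overrightarrow{PD}_x[k]=k-\max\{j<k : x[j]<x[k]\}$ if such $j$ exists and $0$ otherwise; the reverse parent-distance table is $\overleftarrow{PD}_x[k]=\min\{j : k<j\le n,\ x[j]<x[k]\}-k$ if such $j$ exists and $0$ otherwise. Notation: $\overrightarrow{a_x}=\overrightarrow{PD}_x[i]$, $\overrightarrow{b_x}=\overrightarrow{PD}_x[i+1]$, $\overleftarrow{a_x}=\overleftarrow{PD}_x[i+1]$, $\overleftarrow{b_x}=\overleftarrow{PD}_x[i]$. Index ranges $\{a,\ldots,b\}$ with $a>b$ are empty. *)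

theory Defs
  imports Main
begin

text \<open>Sequences are lists of pairwise distinct integers, indexed from 1:
  the k-th entry x[k] is  at x k = x ! (k - 1)  for 1 <= k <= length x.\<close>

definition at :: "int list \<Rightarrow> nat \<Rightarrow> int" where
  "at x k = x ! (k - 1)"

definition tau :: "int list \<Rightarrow> nat \<Rightarrow> int list" where
  "tau x i = x[i - 1 := at x (i + 1), i := at x i]"

definition PD_fwd :: "int list \<Rightarrow> nat \<Rightarrow> nat" where
  "PD_fwd x k =
     (if \<exists>j. 1 \<le> j \<and> j < k \<and> at x j < at x k
      then k - Max {j. 1 \<le> j \<and> j < k \<and> at x j < at x k}
      else 0)"

definition PD_bwd :: "int list \<Rightarrow> nat \<Rightarrow> nat" where
  "PD_bwd x k =
     (if \<exists>j. k < j \<and> j \<le> length x \<and> at x j < at x k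
      then Min {j. k < j \<and> j \<le> length x \<and> at x j < at x k} - k
      else 0)"

end

theory Submission
  imports Defs
begin

lemma at_tau:
  assumes "1 \<le> i" "i + 1 \<le> length x"
  shows "at (tau x i) i = at x (i+1)" "at (tau x i) (i+1) = at x i"
    "\<And>j. 1 \<le> j \<Longrightarrow> j \<noteq> i \<Longrightarrow> j \<noteq> i + 1 \<Longrightarrow> at (tau x i) j = at x j"
    "length (tau x i) = length x"
  using assms by (auto simp: tau_def at_def nth_list_update)

lemma fwd_eq:
  assumes "1 \<le> i" "i + 1 \<le> length x" "i + 2 \<le> k"
    and "(\<exists>j. i+1 < j \<and> j < k \<and> at x j < at x k) \<or> (\<not> at x i < at x k \<and> \<not> at x (i+1) < at x k)"
  shows "PD_fwd x k = PD_fwd (tau x i) k"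
proof -
  let ?y = "tau x i"
  have yk: "at ?y k = at x k" using at_tau(3)[OF assms(1,2)] assms(3) by auto
  have yj: "\<And>j. i+1 < j \<Longrightarrow> at ?y j = at x j" using at_tau(3)[OF assms(1,2)] by auto
  let ?Sx = "{j. 1 \<le> j \<and> j < k \<and> at x j < at x k}"
  let ?Sy = "{j. 1 \<le> j \<and> j < k \<and> at ?y j < at ?y k}"
  show ?thesis
  proof (cases "\<exists>j. i+1 < j \<and> j < k \<and> at x j < at x k")
    case True
    let ?T = "{j. i+1 < j \<and> j < k \<and> at x j < at x k}"
    have fT: "finite ?T" by (rule finite_subset[of _ "{..<k}"]) auto
    have MT: "Max ?T \<in> ?T" using True fT by (intro Max_in) auto
    have ub: "\<And>s. s \<in> ?T \<Longrightarrow> s \<le> Max ?T" using fT by auto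
    have fx: "finite ?Sx" by (rule finite_subset[of _ "{..<k}"]) auto
    have fy: "finite ?Sy" by (rule finite_subset[of _ "{..<k}"]) auto
    have "Max ?Sx = Max ?T"
    proof (rule Max_eqI[OF fx])
      show "Max ?T \<in> ?Sx" using MT by auto
      fix s assume "s \<in> ?Sx"
      then show "s \<le> Max ?T" using ub[of s] MT by (cases "i+1 < s") auto
    qed
    moreover have "Max ?Sy = Max ?T"
    proof (rule Max_eqI[OF fy])
      show "Max ?T \<in> ?Sy" using MT yk yj by auto
      fix s assume "s \<in> ?Sy"
      then show "s \<le> Max ?T" using ub[of s] MT yk yj by (cases "i+1 < s") auto
    qed
    moreover have "\<exists>j. 1 \<le> j \<and> j < k \<and> at x j < at x k" proof -
      from True obtain j where "i+1 < j" "j < k" "at x j < at x k" by blast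
      then show ?thesis using assms(1) by (intro exI[of _ j]) simp
    qed
    moreover have "\<exists>j. 1 \<le> j \<and> j < k \<and> at ?y j < at ?y k"
    proof -
      from True obtain j where "i+1 < j" "j < k" "at x j < at x k" by blast
      then show ?thesis using assms(1) yk yj[of j] by (intro exI[of _ j]) simp
    qed
    ultimately show ?thesis unfolding PD_fwd_def by simp
  next
    case False
    with assms(4) have h: "\<not> at x i < at x k" "\<not> at x (i+1) < at x k" by auto
    have "\<And>j. 1 \<le> j \<Longrightarrow> (at ?y j < at ?y k) = (at x j < at x k)"
    proof -
      fix j assume "1 \<le> (j::nat)"
      then show "(at ?y j < at ?y k) = (at x j < at x k)"
        using h yk at_tau[OF assms(1,2)] by (cases "j = i"; cases "j = i+1") auto
    qed
    then have "?Sx = ?Sy" by auto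
    moreover have "(\<exists>j. 1 \<le> j \<and> j < k \<and> at x j < at x k) = (\<exists>j. 1 \<le> j \<and> j < k \<and> at ?y j < at ?y k)"
      using \<open>\<And>j. 1 \<le> j \<Longrightarrow> _\<close> by auto
    ultimately show ?thesis unfolding PD_fwd_def by (simp only:)
  qed
qed

lemma bwd_eq:
  assumes "1 \<le> i" "i + 1 \<le> length x" "1 \<le> k" "k < i"
    and "(\<exists>j. k < j \<and> j < i \<and> at x j < at x k) \<or> (\<not> at x i < at x k \<and> \<not> at x (i+1) < at x k)"
  shows "PD_bwd x k = PD_bwd (tau x i) k"
proof -
  let ?y = "tau x i"
  have ly: "length ?y = length x" using at_tau(4)[OF assms(1,2)] .
  have yk: "at ?y k = at x k" using at_tau(3)[OF assms(1,2)] assms(3,4) by auto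
  have yj: "\<And>j. k < j \<Longrightarrow> j < i \<Longrightarrow> at ?y j = at x j" using at_tau(3)[OF assms(1,2)] assms(3) by auto
  let ?Sx = "{j. k < j \<and> j \<le> length x \<and> at x j < at x k}"
  let ?Sy = "{j. k < j \<and> j \<le> length ?y \<and> at ?y j < at ?y k}"
  show ?thesis
  proof (cases "\<exists>j. k < j \<and> j < i \<and> at x j < at x k")
    case True
    let ?T = "{j. k < j \<and> j < i \<and> at x j < at x k}"
    have fT: "finite ?T" by (rule finite_subset[of _ "{..<i}"]) auto
    have MT: "Min ?T \<in> ?T" using True fT by (intro Min_in) auto
    have ub: "\<And>s. s \<in> ?T \<Longrightarrow> Min ?T \<le> s" using fT by auto
    have fx: "finite ?Sx" by (rule finite_subset[of _ "{..length x}"]) auto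
    have fy: "finite ?Sy" by (rule finite_subset[of _ "{..length ?y}"]) auto
    have "Min ?Sx = Min ?T"
    proof (rule Min_eqI[OF fx])
      show "Min ?T \<in> ?Sx" using MT assms(2) by auto
      fix s assume "s \<in> ?Sx"
      then show "Min ?T \<le> s" using ub[of s] MT by (cases "s < i") auto
    qed
    moreover have "Min ?Sy = Min ?T"
    proof (rule Min_eqI[OF fy])
      show "Min ?T \<in> ?Sy" using MT yk yj assms(2) ly by auto
      fix s assume "s \<in> ?Sy"
      then show "Min ?T \<le> s" using ub[of s] MT yk yj by (cases "s < i") auto
    qed
    moreover have "\<exists>j. k < j \<and> j \<le> length x \<and> at x j < at x k" using True assms(2) by force
    moreover have "\<exists>j. k < j \<and> j \<le> length ?y \<and> at ?y j < at ?y k" using True yk yj ly assms(2) by force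
    ultimately show ?thesis unfolding PD_bwd_def by simp
  next
    case False
    with assms(5) have h: "\<not> at x i < at x k" "\<not> at x (i+1) < at x k" by auto
    have e: "\<And>j. k < j \<Longrightarrow> (at ?y j < at ?y k) = (at x j < at x k)"
    proof -
      fix j assume "k < (j::nat)"
      then show "(at ?y j < at ?y k) = (at x j < at x k)"
        using h yk at_tau[OF assms(1,2)] assms(3) by (cases "j = i"; cases "j = i+1") auto
    qed
    then have "?Sx = ?Sy" using ly by auto
    moreover have "(\<exists>j. k < j \<and> j \<le> length x \<and> at x j < at x k) = (\<exists>j. k < j \<and> j \<le> length ?y \<and> at ?y j < at ?y k)"
      using e ly by auto
    ultimately show ?thesis unfolding PD_bwd_def by (simp only:)
  qed
qed

lemma fwd_part:
  assumes "1 \<le> i" "i + 1 \<le> length x" "i + 2 \<le> m" "m \<le> k"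
    "at x m < at x i" "at x m < at x (i+1)"
  shows "PD_fwd x k = PD_fwd (tau x i) k"
proof (rule fwd_eq[OF assms(1,2)])
  show "i + 2 \<le> k" using assms by simp
  show "(\<exists>j. i+1 < j \<and> j < k \<and> at x j < at x k) \<or> (\<not> at x i < at x k \<and> \<not> at x (i+1) < at x k)"
  proof (cases "at x m < at x k")
    case True
    then have "m \<noteq> k" by auto
    then show ?thesis using True assms by (intro disjI1 exI[of _ m]) auto
  next
    case False then show ?thesis using assms by auto
  qed
qed

lemma bwd_part:
  assumes "1 \<le> i" "i + 1 \<le> length x" "m < i" "1 \<le> k" "k \<le> m"
    "at x m < at x i" "at x m < at x (i+1)"
  shows "PD_bwd x k = PD_bwd (tau x i) k"
proof (rule bwd_eq[OF assms(1,2,4)])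
  show "k < i" using assms by simp
  show "(\<exists>j. k < j \<and> j < i \<and> at x j < at x k) \<or> (\<not> at x i < at x k \<and> \<not> at x (i+1) < at x k)"
  proof (cases "at x m < at x k")
    case True
    then have "m \<noteq> k" by auto
    then show ?thesis using True assms by (intro disjI1 exI[of _ m]) auto
  next
    case False then show ?thesis using assms by auto
  qed
qed

lemma PD_bwd_pos:
  assumes "PD_bwd x k > 0"
  shows "at x (k + PD_bwd x k) < at x k" "k + PD_bwd x k \<le> length x"
proof -
  let ?S = "{j. k < j \<and> j \<le> length x \<and> at x j < at x k}"
  have ex: "\<exists>j. k < j \<and> j \<le> length x \<and> at x j < at x k"
    using assms unfolding PD_bwd_def by (auto split: if_splits)
  have f: "finite ?S" by (rule finite_subset[of _ "{..length x}"]) auto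
  have "Min ?S \<in> ?S" using ex f by (intro Min_in) auto
  moreover have "PD_bwd x k = Min ?S - k" using ex unfolding PD_bwd_def by simp
  ultimately show "at x (k + PD_bwd x k) < at x k" "k + PD_bwd x k \<le> length x" by auto
qed

lemma PD_fwd_pos:
  assumes "PD_fwd x k > 0"
  shows "at x (k - PD_fwd x k) < at x k" "1 \<le> k - PD_fwd x k" "PD_fwd x k \<le> k"
proof -
  let ?S = "{j. 1 \<le> j \<and> j < k \<and> at x j < at x k}"
  have ex: "\<exists>j. 1 \<le> j \<and> j < k \<and> at x j < at x k"
    using assms unfolding PD_fwd_def by (auto split: if_splits)
  have f: "finite ?S" by (rule finite_subset[of _ "{..<k}"]) auto
  have "Max ?S \<in> ?S" using ex f by (intro Max_in) auto
  moreover have "PD_fwd x k = k - Max ?S" using ex unfolding PD_fwd_def by simp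
  ultimately show "at x (k - PD_fwd x k) < at x k" "1 \<le> k - PD_fwd x k" "PD_fwd x k \<le> k" by auto
qed

theorem lemma4:
  fixes x :: "int list" and n i r l :: nat
  assumes "distinct x"
    and "length x = n"
    and "1 \<le> i" and "i \<le> n - 1"
    and "r = (if at x i < at x (i + 1) \<and> PD_bwd x i > 1 then PD_bwd x i
              else if at x i > at x (i + 1) \<and> PD_bwd x (i + 1) > 0 then PD_bwd x (i + 1) + 1
              else n - i + 1)"
    and "l = (if at x i < at x (i + 1) \<and> PD_fwd x i > 0 then PD_fwd x i
              else if at x i > at x (i + 1) \<and> PD_fwd x (i + 1) > 1 then PD_fwd x (i + 1) - 1
              else i)"
  shows "(\<forall>k. i + r \<le> k \<and> k \<le> n \<longrightarrow> PD_fwd x k = PD_fwd (tau x i) k)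
       \<and> (\<forall>k. 1 \<le> k \<and> int k \<le> int i - int l \<longrightarrow> PD_bwd x k = PD_bwd (tau x i) k)"
proof (intro conjI allI impI)
  have i1: "i + 1 \<le> length x" using assms(2,3,4) by simp
  fix k assume k: "i + r \<le> k \<and> k \<le> n"
  show "PD_fwd x k = PD_fwd (tau x i) k"
  proof (cases "at x i < at x (i + 1) \<and> PD_bwd x i > 1")
    case True
    then have r: "r = PD_bwd x i" using assms(5) by simp
    show ?thesis using PD_bwd_pos[of x i] True k r
      by (intro fwd_part[OF assms(3) i1, of "i + r"]) auto
  next
    case F1: False
    show ?thesis
    proof (cases "at x i > at x (i + 1) \<and> PD_bwd x (i + 1) > 0")
      case True
      then have r: "r = PD_bwd x (i+1) + 1" using assms(5) F1 by simp
      show ?thesis using PD_bwd_pos[of x "i+1"] True k r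
        by (intro fwd_part[OF assms(3) i1, of "i + r"]) auto
    next
      case False
      then have "r = n - i + 1" using assms(5) by (simp only: if_not_P[OF F1] if_not_P[OF False] if_False)
      then show ?thesis using k i1 assms(2) by simp
    qed
  qed
next
  have i1: "i + 1 \<le> length x" using assms(2,3,4) by simp
  fix k assume k: "1 \<le> k \<and> int k \<le> int i - int l"
  show "PD_bwd x k = PD_bwd (tau x i) k"
  proof (cases "at x i < at x (i + 1) \<and> PD_fwd x i > 0")
    case True
    then have l: "l = PD_fwd x i" using assms(6) by simp
    show ?thesis using PD_fwd_pos[of x i] True k l
      by (intro bwd_part[OF assms(3) i1, of "i - l"]) auto
  next
    case F1: False
    show ?thesis
    proof (cases "at x i > at x (i + 1) \<and> PD_fwd x (i + 1) > 1")
      case True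
      then have l: "l = PD_fwd x (i+1) - 1" using assms(6) F1 by simp
      have "i - l = i + 1 - PD_fwd x (i+1)" using l True PD_fwd_pos(3)[of x "i+1"] by auto
      then show ?thesis using PD_fwd_pos[of x "i+1"] True k l
        by (intro bwd_part[OF assms(3) i1, of "i - l"]) auto
    next
      case False
      then have "l = i" using assms(6) by (simp only: if_not_P[OF F1] if_not_P[OF False] if_False)
      then show ?thesis using k by simp
    qed
  qed
qed

end
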